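(* Let $q$ be a power of $2$ and let $m \ge 2$ be an integer with $\gcd(q-1, m(m-1)) = 1$. Then every $d \in \mathbb{F}_q$ is the discriminant of the same number of monic polynomials of degree $m$ in $\mathbb{F}_q[x]$ (namely $q^{m-1}$ of them), and every $d \in \mathbb{F}_q^\times$ is the discriminant of the same number of monic irreducible polynomials of degree $m$ in $\mathbb{F}_q[x]$.
   Context: For a nonconstant polynomial $f$ of degree $m \ge 2$ over a field $K$ with leading coefficient $a_m$, factored as $f = a_m\prod_{i=1}^m (x-\alpha_i)$ in a splitting field, $\operatorname{disc}(f) = a_m^{2m-2}\prod_{i<j}(\alpha_i-\alpha_j)^2$; for linear $f$, $\operatorname{disc}(f) = 1$. $\mathbb{F}_q$ denotes the finite field with $q$ elements. *)

theory Defs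
  imports "HOL-Algebra.Algebraic_Closure_Type"
begin

definition disc_roots :: "'a::field poly \<Rightarrow> 'a alg_closure list" where
  "disc_roots f = (SOME xs. map_poly to_ac f =
      smult (to_ac (lead_coeff f)) (\<Prod>x\<leftarrow>xs. [:-x, 1:]))"

definition disc :: "'a::field poly \<Rightarrow> 'a" where
  "disc f = (if degree f = 1 then 1 else
     (let m = degree f; \<alpha> = disc_roots f in
      of_ac (to_ac (lead_coeff f) ^ (2 * m - 2) *
        (\<Prod>i<length \<alpha>. \<Prod>j<length \<alpha>. if i < j then (\<alpha> ! i - \<alpha> ! j) ^ 2 else 1))))"

end

theory Submission
  imports Defs
begin

lemma card_one_zero: "of_nat (card (UNIV::'a::{finite,field} set)) = (0::'a)"
proof -
  have s: "surj (\<lambda>x::'a. x + 1)"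
    by (rule surjI[of _ "\<lambda>x. x - 1"]) simp
  have "(\<Sum>x\<in>UNIV. (x::'a) + 1) = (\<Sum>x\<in>(\<lambda>x. x + 1) ` UNIV. (x::'a))"
    by (subst sum.reindex) (auto simp: inj_on_def)
  also have "\<dots> = (\<Sum>x\<in>UNIV. x)" using s by simp
  finally show ?thesis by (simp add: sum.distrib)
qed

lemma char2:
  assumes "\<exists>k. card (UNIV :: 'a::{finite,field} set) = 2 ^ k"
  shows "(2::'a) = 0"
proof (rule ccontr)
  assume ne: "(2::'a) \<noteq> 0"
  obtain k where k: "card (UNIV :: 'a set) = 2 ^ k" using assms by blast
  have "(of_nat (2 ^ k) :: 'a) = 0" using card_one_zero[where 'a='a] k by simp
  hence "(2::'a) ^ k = 0" by simp
  thus False using ne by simp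
qed

lemma fermat:
  fixes x :: "'a::{finite,field}"
  assumes "x \<noteq> 0"
  shows "x ^ (card (UNIV::'a set) - 1) = 1"
proof -
  define N where "N = (UNIV - {0::'a})"
  have fin: "finite N" by simp
  have img: "(\<lambda>y. x * y) ` N = N"
  proof
    show "(\<lambda>y. x * y) ` N \<subseteq> N" using assms by (auto simp: N_def)
    show "N \<subseteq> (\<lambda>y. x * y) ` N"
    proof
      fix y assume "y \<in> N"
      hence "y / x \<in> N" "y = x * (y / x)" using assms by (auto simp: N_def)
      thus "y \<in> (\<lambda>y. x * y) ` N" by blast
    qed
  qed
  have inj: "inj_on (\<lambda>y. x * y) N" using assms by (auto simp: inj_on_def)
  have "prod (\<lambda>y. y) N = prod (\<lambda>y. y) ((\<lambda>y. x * y) ` N)" using img by simp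
  also have "\<dots> = prod (\<lambda>y. x * y) N" using inj by (simp add: prod.reindex)
  also have "\<dots> = x ^ card N * prod (\<lambda>y. y) N" by (simp add: prod.distrib)
  finally have e: "prod (\<lambda>y. y) N = x ^ card N * prod (\<lambda>y. y) N" .
  have nz: "prod (\<lambda>y. y) N \<noteq> 0" by (simp add: N_def)
  have "x ^ card N = 1" using e nz by simp
  moreover have "card N = card (UNIV::'a set) - 1" by (simp add: N_def card_Diff_singleton)
  ultimately show ?thesis by simp
qed

lemma frob_id:
  fixes x :: "'a::{finite,field}"
  shows "x ^ card (UNIV::'a set) = x"
proof (cases "x = 0")
  case True
  have "card (UNIV::'a set) \<noteq> 0" by (simp add: card_gt_0_iff)
  thus ?thesis using True by (simp add: card_gt_0_iff)
next
  case False
  have c: "card (UNIV::'a set) = Suc (card (UNIV::'a set) - 1)"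
    by (simp add: card_gt_0_iff)
  have "x ^ card (UNIV::'a set) = x * x ^ (card (UNIV::'a set) - 1)"
    by (subst c) simp
  thus ?thesis using fermat[OF False] by simp
qed

lemma sq_add_char2:
  fixes a b :: "'b::comm_ring_1"
  assumes "(2::'b) = 0"
  shows "(a + b) ^ 2 = a ^ 2 + b ^ 2"
  using assms by (simp add: power2_sum)

lemma neg_char2:
  fixes b :: "'b::comm_ring_1"
  assumes "(2::'b) = 0"
  shows "- b = b"
proof -
  have "b + b = 2 * b" by simp
  hence "b + b = 0" using assms by simp
  thus ?thesis by (simp add: add_eq_0_iff)
qed

lemma pow2k_add_char2:
  fixes a b :: "'b::comm_ring_1"
  assumes "(2::'b) = 0"
  shows "(a + b) ^ (2 ^ k) = a ^ (2 ^ k) + b ^ (2 ^ k)"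
proof (induction k)
  case 0 thus ?case by simp
next
  case (Suc k)
  have "(a + b) ^ (2 ^ Suc k) = ((a + b) ^ (2 ^ k)) ^ 2" by (simp add: power_mult[symmetric] mult.commute)
  also have "\<dots> = (a ^ (2 ^ k)) ^ 2 + (b ^ (2 ^ k)) ^ 2" using Suc sq_add_char2[OF assms] by simp
  also have "\<dots> = a ^ (2 ^ Suc k) + b ^ (2 ^ Suc k)" by (simp add: power_mult[symmetric] mult.commute)
  finally show ?case .
qed

lemma sq_inj_char2:
  fixes a b :: "'b::idom"
  assumes "(2::'b) = 0" "a ^ 2 = b ^ 2"
  shows "a = b"
proof -
  have "(a + b) ^ 2 = a^2 + b^2" using sq_add_char2[OF assms(1)] .
  also have "\<dots> = b^2 + b^2" using assms(2) by simp
  also have "\<dots> = 2 * b^2" by simp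
  finally have "(a + b) ^ 2 = 0" using assms(1) by simp
  hence "a + b = 0" by simp
  hence "a = - b" by (simp add: add_eq_0_iff)
  thus ?thesis using neg_char2[OF assms(1)] by simp
qed

lemma poly_char2:
  assumes "(2::'a::field) = 0"
  shows "(2::'a poly) = 0"
proof -
  have "(2::'a poly) = of_nat 2" by simp
  also have "\<dots> = [:of_nat 2:]" by (rule of_nat_poly)
  finally have "(2::'a poly) = [:2:]" by simp
  thus ?thesis using assms by simp
qed

section \<open>Counting polynomials of bounded degree\<close>

definition Bd :: "nat \<Rightarrow> 'a::zero poly set" where
  "Bd n = {Q. Q = 0 \<or> degree Q < n}"

definition Mon :: "nat \<Rightarrow> 'a::field poly set" where
  "Mon k = {P. lead_coeff P = 1 \<and> degree P = k}"

lemma Bd_0: "Bd 0 = {0}" by (auto simp: Bd_def)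

lemma Bd_Suc: "(Bd (Suc n) :: 'a::zero poly set) = (\<lambda>(a, R). pCons a R) ` (UNIV \<times> (Bd n :: 'a poly set))"
proof
  show "(Bd (Suc n) :: 'a poly set) \<subseteq> (\<lambda>(a, R). pCons a R) ` (UNIV \<times> (Bd n :: 'a poly set))"
  proof
    fix p :: "'a poly" assume p: "p \<in> Bd (Suc n)"
    obtain a R where pe: "p = pCons a R" by (cases p) auto
    have "R \<in> Bd n"
    proof (cases "R = 0")
      case True thus ?thesis by (simp add: Bd_def)
    next
      case False
      hence "degree p = Suc (degree R)" using pe by simp
      thus ?thesis using p False by (auto simp: Bd_def)
    qed
    thus "p \<in> (\<lambda>(a, R). pCons a R) ` (UNIV \<times> (Bd n :: 'a poly set))" using pe by auto
  qed
next
  show "(\<lambda>(a, R). pCons a R) ` (UNIV \<times> (Bd n :: 'a poly set)) \<subseteq> Bd (Suc n)"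
  proof clarify
    fix a and R :: "'a poly" assume "R \<in> Bd n"
    thus "pCons a R \<in> Bd (Suc n)"
      by (cases "R = 0") (auto simp: Bd_def)
  qed
qed

lemma card_Bd:
  "finite (Bd n :: 'a::{finite,field} poly set) \<and> card (Bd n :: 'a poly set) = card (UNIV::'a set) ^ n"
proof (induction n)
  case 0 thus ?case by (simp add: Bd_0)
next
  case (Suc n)
  have inj: "inj_on (\<lambda>(a, R). pCons a R) (UNIV \<times> (Bd n :: 'a poly set))"
    by (auto simp: inj_on_def)
  have "card (Bd (Suc n) :: 'a poly set) = card ((UNIV::'a set) \<times> (Bd n :: 'a poly set))"
    unfolding Bd_Suc using card_image[OF inj] by simp
  also have "\<dots> = card (UNIV::'a set) * card (UNIV::'a set) ^ n" using Suc by (simp add: card_cartesian_product)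
  finally show ?case using Suc unfolding Bd_Suc by simp
qed

lemma Mon_eq: "(Mon k :: 'a::field poly set) = (\<lambda>Q. monom 1 k + Q) ` Bd k"
proof
  show "(\<lambda>Q. monom 1 k + Q) ` Bd k \<subseteq> (Mon k :: 'a poly set)"
  proof clarify
    fix Q :: "'a poly" assume Q: "Q \<in> Bd k"
    show "monom 1 k + Q \<in> Mon k"
    proof (cases "Q = 0")
      case True thus ?thesis by (simp add: Mon_def degree_monom_eq)
    next
      case False
      hence dQ: "degree Q < degree (monom (1::'a) k)" using Q by (simp add: Bd_def degree_monom_eq)
      have "degree (monom 1 k + Q) = k" using degree_add_eq_left[OF dQ] by (simp add: degree_monom_eq)
      moreover have "lead_coeff (monom 1 k + Q) = 1"
        using calculation dQ by (simp add: degree_monom_eq coeff_eq_0)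
      ultimately show ?thesis by (simp add: Mon_def)
    qed
  qed
next
  show "(Mon k :: 'a poly set) \<subseteq> (\<lambda>Q. monom 1 k + Q) ` Bd k"
  proof
    fix P :: "'a poly" assume P: "P \<in> Mon k"
    have dP: "degree P = k" and lP: "lead_coeff P = 1" using P by (auto simp: Mon_def)
    have ck: "coeff P k = 1" by (subst dP[symmetric]) (rule lP)
    define Q where "Q = P - monom 1 k"
    have c: "coeff Q i = 0" if "i \<ge> k" for i
    proof (cases "i = k")
      case True thus ?thesis using ck by (simp add: Q_def)
    next
      case False
      hence "i > k" using that by simp
      thus ?thesis using P by (simp add: Q_def Mon_def coeff_eq_0)
    qed
    have "Q \<in> Bd k"
    proof (cases "k = 0")
      case True
      hence "Q = 0" using c by (intro poly_eqI) simp
      thus ?thesis by (simp add: Bd_def)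
    next
      case False
      have "degree Q \<le> k - 1" by (rule degree_le) (use c in auto)
      thus ?thesis using False unfolding Bd_def by simp linarith
    qed
    moreover have "P = monom 1 k + Q" by (simp add: Q_def)
    ultimately show "P \<in> (\<lambda>Q. monom 1 k + Q) ` Bd k" by blast
  qed
qed

lemma card_Mon:
  "finite (Mon k :: 'a::{finite,field} poly set) \<and> card (Mon k :: 'a poly set) = card (UNIV::'a set) ^ k"
proof -
  have inj: "inj_on (\<lambda>Q::'a poly. monom 1 k + Q) (Bd k)" by (auto simp: inj_on_def)
  show ?thesis unfolding Mon_eq using card_Bd[of k] card_image[OF inj] by auto
qed

lemma map_poly_hom_add:
  assumes "h 0 = 0" "\<And>x y. h (x + y) = h x + h y"
  shows "map_poly h (p + q) = map_poly h p + map_poly h q"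
  by (rule poly_eqI) (simp add: coeff_map_poly assms)

lemma map_poly_hom_mult:
  fixes h :: "'a::comm_semiring_1 \<Rightarrow> 'b::comm_semiring_1"
  assumes "h 0 = 0" "\<And>x y. h (x + y) = h x + h y" "\<And>x y. h (x * y) = h x * h y"
  shows "map_poly h (p * q) = map_poly h p * map_poly h q"
proof (rule poly_eqI)
  fix n
  have "coeff (map_poly h (p * q)) n = h (\<Sum>i\<le>n. coeff p i * coeff q (n - i))"
    by (simp add: coeff_map_poly assms coeff_mult)
  also have "\<dots> = (\<Sum>i\<le>n. h (coeff p i * coeff q (n - i)))"
    using sum_comp_morphism[of h, OF assms(1,2), of "\<lambda>i. coeff p i * coeff q (n - i)" "{..n}"]
    by (simp add: o_def)
  also have "\<dots> = coeff (map_poly h p * map_poly h q) n"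
    by (simp add: coeff_map_poly assms coeff_mult)
  finally show "coeff (map_poly h (p * q)) n = coeff (map_poly h p * map_poly h q) n" .
qed

lemma map_poly_hom_prod_list:
  fixes h :: "'a::comm_semiring_1 \<Rightarrow> 'b::comm_semiring_1"
  assumes "h 0 = 0" "h 1 = 1" "\<And>x y. h (x + y) = h x + h y" "\<And>x y. h (x * y) = h x * h y"
  shows "map_poly h (prod_list ps) = prod_list (map (map_poly h) ps)"
  by (induction ps) (simp_all add: map_poly_hom_mult assms)

lemma map_poly_hom_pcompose:
  fixes h :: "'a::comm_semiring_1 \<Rightarrow> 'b::comm_semiring_1"
  assumes "h 0 = 0" "\<And>x y. h (x + y) = h x + h y" "\<And>x y. h (x * y) = h x * h y"
  shows "map_poly h (pcompose p q) = pcompose (map_poly h p) (map_poly h q)"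
proof (induction p)
  case 0 thus ?case by simp
next
  case (pCons a p)
  have "map_poly h (pcompose (pCons a p) q) = map_poly h ([:a:] + q * pcompose p q)"
    by (simp add: pcompose_pCons)
  also have "\<dots> = [:h a:] + map_poly h q * map_poly h (pcompose p q)"
    by (simp add: map_poly_hom_add map_poly_hom_mult assms map_poly_pCons)
  also have "\<dots> = pcompose (map_poly h (pCons a p)) (map_poly h q)"
    using pCons by (simp add: map_poly_pCons assms pcompose_pCons)
  finally show ?case .
qed

lemma pderiv_map_to_ac: "pderiv (map_poly to_ac p) = map_poly to_ac (pderiv p)"
  by (rule poly_eqI) (simp add: coeff_map_poly coeff_pderiv)

lemma map_to_ac_add: "map_poly to_ac (p + q) = map_poly to_ac p + map_poly to_ac q"
  by (rule map_poly_hom_add) simp_all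

lemma map_to_ac_mult: "map_poly to_ac (p * q) = map_poly to_ac p * map_poly to_ac q"
  by (rule map_poly_hom_mult) simp_all

section \<open>The list discriminant\<close>

fun Drec :: "'b::comm_ring_1 list \<Rightarrow> 'b" where
  "Drec [] = 1"
| "Drec (x # xs) = (\<Prod>y\<leftarrow>xs. (x - y) ^ 2) * Drec xs"

lemma prod_list_nth: "(\<Prod>y\<leftarrow>xs. f y) = (\<Prod>j<length xs. f (xs ! j))"
proof (induction xs)
  case Nil show ?case by simp
next
  case (Cons x xs) thus ?case by (simp add: prod.lessThan_Suc_shift del: prod.lessThan_Suc)
qed

lemma Drec_index:
  "(\<Prod>i<length \<alpha>. \<Prod>j<length \<alpha>. if i < j then (\<alpha> ! i - \<alpha> ! j) ^ 2 else 1) = Drec \<alpha>"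
proof (induction \<alpha>)
  case Nil show ?case by simp
next
  case (Cons x xs)
  let ?n = "length xs"
  let ?g = "\<lambda>i j. if i < j then ((x # xs) ! i - (x # xs) ! j) ^ 2 else 1"
  have "(\<Prod>i<length (x # xs). \<Prod>j<length (x # xs). ?g i j)
      = (\<Prod>j<Suc ?n. ?g 0 j) * (\<Prod>i<?n. \<Prod>j<Suc ?n. ?g (Suc i) j)"
    by (simp add: prod.lessThan_Suc_shift del: prod.lessThan_Suc)
  also have "(\<Prod>j<Suc ?n. ?g 0 j) = (\<Prod>j<?n. (x - xs ! j) ^ 2)"
    by (simp add: prod.lessThan_Suc_shift del: prod.lessThan_Suc)
  also have "(\<Prod>i<?n. \<Prod>j<Suc ?n. ?g (Suc i) j)
      = (\<Prod>i<?n. \<Prod>j<?n. if i < j then (xs ! i - xs ! j) ^ 2 else 1)"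
  proof (rule prod.cong[OF refl])
    fix i assume "i \<in> {..<?n}"
    have gS: "?g (Suc i) (Suc j) = (if i < j then (xs ! i - xs ! j) ^ 2 else 1)" for j
      by simp
    have "(\<Prod>j<Suc ?n. ?g (Suc i) j) = ?g (Suc i) 0 * (\<Prod>j<?n. ?g (Suc i) (Suc j))"
      by (rule prod.lessThan_Suc_shift)
    also have "\<dots> = (\<Prod>j<?n. if i < j then (xs ! i - xs ! j) ^ 2 else 1)"
      by (simp only: gS) simp
    finally show "(\<Prod>j<Suc ?n. ?g (Suc i) j) = (\<Prod>j<?n. if i < j then (xs ! i - xs ! j) ^ 2 else 1)" .
  qed
  also have "(\<Prod>j<?n. (x - xs ! j) ^ 2) = (\<Prod>y\<leftarrow>xs. (x - y) ^ 2)"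
    by (rule prod_list_nth[symmetric])
  finally show ?case using Cons by simp
qed

lemma Drec_zero_iff:
  fixes xs :: "'b::idom list"
  shows "Drec xs = 0 \<longleftrightarrow> \<not> distinct xs"
  by (induction xs) (auto simp: prod_list_zero_iff)

lemma prod_list_remove1:
  fixes f :: "'c \<Rightarrow> 'b::comm_monoid_mult"
  assumes "x \<in> set xs"
  shows "(\<Prod>y\<leftarrow>xs. f y) = f x * (\<Prod>y\<leftarrow>remove1 x xs. f y)"
  using assms by (induction xs) (auto simp: ac_simps)

lemma prod_list_mset_eq:
  fixes f :: "'c \<Rightarrow> 'b::comm_monoid_mult"
  assumes "mset xs = mset ys"
  shows "(\<Prod>y\<leftarrow>xs. f y) = (\<Prod>y\<leftarrow>ys. f y)"
  by (metis assms mset_map prod_mset_prod_list)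

lemma Drec_remove1:
  assumes "x \<in> set ys"
  shows "Drec ys = (\<Prod>y\<leftarrow>remove1 x ys. (x - y) ^ 2) * Drec (remove1 x ys)"
  using assms
proof (induction ys)
  case Nil thus ?case by simp
next
  case (Cons z zs)
  show ?case
  proof (cases "z = x")
    case True thus ?thesis by simp
  next
    case False
    hence xz: "x \<in> set zs" using Cons.prems by simp
    have "Drec (z # zs) = (\<Prod>y\<leftarrow>zs. (z - y) ^ 2) * Drec zs" by simp
    also have "(\<Prod>y\<leftarrow>zs. (z - y) ^ 2) = (z - x) ^ 2 * (\<Prod>y\<leftarrow>remove1 x zs. (z - y) ^ 2)"
      by (rule prod_list_remove1[OF xz])
    also have "Drec zs = (\<Prod>y\<leftarrow>remove1 x zs. (x - y) ^ 2) * Drec (remove1 x zs)"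
      by (rule Cons.IH[OF xz])
    finally show ?thesis using False
      by (simp add: power2_commute[of z x] ac_simps)
  qed
qed

lemma Drec_mset:
  assumes "mset xs = mset ys"
  shows "Drec xs = Drec ys"
  using assms
proof (induction xs arbitrary: ys)
  case Nil thus ?case by simp
next
  case (Cons x xs)
  have xy: "x \<in> set ys" using Cons.prems by (metis list.set_intros(1) set_mset_mset)
  have "mset (remove1 x ys) = mset (x # xs) - {#x#}" using Cons.prems by simp
  hence m: "mset xs = mset (remove1 x ys)" by simp
  have "Drec ys = (\<Prod>y\<leftarrow>remove1 x ys. (x - y) ^ 2) * Drec (remove1 x ys)"
    by (rule Drec_remove1[OF xy])
  also have "(\<Prod>y\<leftarrow>remove1 x ys. (x - y) ^ 2) = (\<Prod>y\<leftarrow>xs. (x - y) ^ 2)"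
    by (rule prod_list_mset_eq) (use m in simp)
  also have "Drec (remove1 x ys) = Drec xs" using Cons.IH[OF m] by simp
  finally show ?case by simp
qed

lemma hom_prod_list:
  assumes "h 1 = 1" "\<And>x y. h (x * y) = h x * h y"
  shows "h (\<Prod>y\<leftarrow>xs. f y) = (\<Prod>y\<leftarrow>xs. h (f y))"
  by (induction xs) (simp_all add: assms)

lemma Drec_map_hom:
  fixes h :: "'b::comm_ring_1 \<Rightarrow> 'c::comm_ring_1"
  assumes "h 1 = 1" "\<And>x y. h (x * y) = h x * h y" "\<And>x y. h (x - y) = h x - h y"
  shows "Drec (map h xs) = h (Drec xs)"
proof (induction xs)
  case Nil thus ?case by (simp add: assms)
next
  case (Cons x xs)
  have "h (Drec (x # xs)) = h (\<Prod>y\<leftarrow>xs. (x - y) ^ 2) * h (Drec xs)" by (simp add: assms)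
  also have "h (\<Prod>y\<leftarrow>xs. (x - y) ^ 2) = (\<Prod>y\<leftarrow>xs. h ((x - y) ^ 2))"
    by (rule hom_prod_list[OF assms(1,2)])
  also have "\<dots> = (\<Prod>y\<leftarrow>xs. (h x - h y) ^ 2)" by (simp add: power2_eq_square assms)
  finally show ?case using Cons by (simp add: o_def)
qed

lemma prod_list_const_mult:
  fixes f :: "'c \<Rightarrow> 'b::comm_monoid_mult"
  shows "(\<Prod>y\<leftarrow>xs. c * f y) = c ^ length xs * (\<Prod>y\<leftarrow>xs. f y)"
  by (induction xs) (simp_all add: ac_simps)

lemma Drec_scale:
  fixes c :: "'b::comm_ring_1"
  shows "Drec (map ((*) c) xs) = c ^ (length xs * (length xs - 1)) * Drec xs"
proof (induction xs)
  case Nil thus ?case by simp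
next
  case (Cons x xs)
  let ?n = "length xs"
  have "(\<Prod>y\<leftarrow>map ((*) c) xs. (c * x - y) ^ 2) = (\<Prod>y\<leftarrow>xs. c ^ 2 * (x - y) ^ 2)"
    by (simp add: o_def power_mult_distrib right_diff_distrib[symmetric])
  also have "\<dots> = (c ^ 2) ^ ?n * (\<Prod>y\<leftarrow>xs. (x - y) ^ 2)" by (rule prod_list_const_mult)
  finally have e: "(\<Prod>y\<leftarrow>map ((*) c) xs. (c * x - y) ^ 2) = (c ^ 2) ^ ?n * (\<Prod>y\<leftarrow>xs. (x - y) ^ 2)" .
  have ex: "2 * ?n + ?n * (?n - 1) = Suc ?n * (Suc ?n - 1)" by (cases ?n) auto
  have "Drec (map ((*) c) (x # xs)) = (c ^ 2) ^ ?n * (\<Prod>y\<leftarrow>xs. (x - y) ^ 2) * (c ^ (?n * (?n - 1)) * Drec xs)"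
    using e Cons by simp
  also have "\<dots> = c ^ (2 * ?n + ?n * (?n - 1)) * ((\<Prod>y\<leftarrow>xs. (x - y) ^ 2) * Drec xs)"
    by (simp only: power_add power_mult) (simp add: ac_simps)
  also note ex
  finally show ?case by simp
qed

lemma lin_prod_monic:
  fixes xs :: "'b::field list"
  shows "lead_coeff (\<Prod>x\<leftarrow>xs. [:-x, 1:]) = 1 \<and> degree (\<Prod>x\<leftarrow>xs. [:-x, 1:]) = length xs"
proof (induction xs)
  case Nil thus ?case by simp
next
  case (Cons x xs)
  define P where "P = (\<Prod>x\<leftarrow>xs. [:-x, 1:])"
  have nz: "P \<noteq> 0" using Cons by (auto simp: P_def)
  have lP: "lead_coeff P = 1" using Cons unfolding P_def by blast
  have l: "lead_coeff ([:-x, 1:] * P) = 1" unfolding lead_coeff_mult using lP by simp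
  have d: "degree ([:-x, 1:] * P) = Suc (length xs)"
    by (subst degree_mult_eq) (use nz Cons in \<open>simp_all add: P_def\<close>)
  show ?case using l d by (simp add: P_def del: mult_pCons_left)
qed

lemma poly_lin_prod: "poly (\<Prod>y\<leftarrow>ys. [:-y, 1:]) x = (\<Prod>y\<leftarrow>ys. (x::'b::comm_ring_1) - y)"
proof (induction ys)
  case Nil thus ?case by simp
next
  case (Cons a ys)
  have "poly ([:-a, 1:] * (\<Prod>y\<leftarrow>ys. [:-y, 1:])) x = poly [:-a, 1:] x * poly (\<Prod>y\<leftarrow>ys. [:-y, 1:]) x"
    by (rule poly_mult)
  also have "poly [:-a, 1:] x = x - a" by simp
  finally show ?case using Cons by simp
qed

lemma lin_prod_unique:
  fixes xs :: "'b::field list"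
  assumes "(\<Prod>x\<leftarrow>xs. [:-x, 1:]) = (\<Prod>y\<leftarrow>ys. [:-y, 1:])"
  shows "mset xs = mset ys"
  using assms
proof (induction xs arbitrary: ys)
  case Nil
  hence "length ys = 0" using lin_prod_monic[of ys] by simp
  thus ?case by simp
next
  case (Cons x xs)
  have "poly (\<Prod>y\<leftarrow>ys. [:-y, 1:]) x = 0" using Cons.prems[symmetric] by (simp add: poly_lin_prod)
  hence "(\<Prod>y\<leftarrow>ys. x - y) = 0" by (simp add: poly_lin_prod)
  hence xy: "x \<in> set ys" by (auto simp: prod_list_zero_iff)
  have "[:-x, 1:] * (\<Prod>y\<leftarrow>xs. [:-y, 1:]) = [:-x, 1:] * (\<Prod>y\<leftarrow>remove1 x ys. [:-y, 1:])"
    using Cons.prems prod_list_remove1[OF xy, of "\<lambda>y. [:-y, 1:]"] by simp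
  hence "(\<Prod>y\<leftarrow>xs. [:-y, 1:]) = (\<Prod>y\<leftarrow>remove1 x ys. [:-y, 1:])"
    by (metis mult_left_cancel pCons_eq_0_iff one_neq_zero)
  hence "mset xs = mset (remove1 x ys)" by (rule Cons.IH)
  thus ?case using xy by simp
qed

section \<open>Roots in the algebraic closure\<close>

lemma map_to_ac_nz: "f \<noteq> 0 \<Longrightarrow> map_poly to_ac f \<noteq> 0"
  by (subst map_poly_eq_0_iff) auto

lemma degree_map_to_ac [simp]: "degree (map_poly to_ac f) = degree f"
  by (rule degree_map_poly) simp

lemma lead_coeff_map_to_ac [simp]: "lead_coeff (map_poly to_ac f) = to_ac (lead_coeff f)"
  by (simp add: coeff_map_poly)

lemma disc_roots_spec:
  fixes f :: "'a::field poly"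
  assumes "f \<noteq> 0"
  shows "map_poly to_ac f = smult (to_ac (lead_coeff f)) (\<Prod>x\<leftarrow>disc_roots f. [:-x, 1:])"
proof -
  let ?F = "map_poly to_ac f"
  have nz: "?F \<noteq> 0" using assms by (rule map_to_ac_nz)
  obtain A where A: "?F = smult (lead_coeff ?F) (\<Prod>x\<in>#A. [:-x, 1:])"
    using alg_closed_imp_factorization[OF nz] by blast
  obtain xs where xs: "mset xs = A" using ex_mset by blast
  have "(\<Prod>x\<in>#A. [:-x, 1:]) = (\<Prod>x\<leftarrow>xs. [:-x, 1:])"
    unfolding xs[symmetric] by (metis mset_map prod_mset_prod_list)
  hence "\<exists>xs. ?F = smult (to_ac (lead_coeff f)) (\<Prod>x\<leftarrow>xs. [:-x, 1:])" using A
    by (auto simp: coeff_map_poly)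
  thus ?thesis unfolding disc_roots_def by (rule someI_ex)
qed

lemma monic_roots:
  fixes f :: "'a::field poly"
  assumes "lead_coeff f = 1"
  shows "map_poly to_ac f = (\<Prod>x\<leftarrow>disc_roots f. [:-x, 1:])"
    and "length (disc_roots f) = degree f"
proof -
  have f0: "f \<noteq> 0" using assms by auto
  have "map_poly to_ac f = smult (to_ac (lead_coeff f)) (\<Prod>x\<leftarrow>disc_roots f. [:-x, 1:])"
    by (rule disc_roots_spec[OF f0])
  also have "to_ac (lead_coeff f) = 1" using assms by simp
  finally show e: "map_poly to_ac f = (\<Prod>x\<leftarrow>disc_roots f. [:-x, 1:])" by simp
  have "degree (\<Prod>x\<leftarrow>disc_roots f. [:-x, 1:]) = length (disc_roots f)"
    by (rule conjunct2[OF lin_prod_monic])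
  hence "degree (map_poly to_ac f) = length (disc_roots f)" by (simp only: e)
  thus "length (disc_roots f) = degree f" by simp
qed

lemma disc_monic:
  fixes f :: "'a::field poly"
  assumes "lead_coeff f = 1" "degree f \<ge> 2"
  shows "disc f = of_ac (Drec (disc_roots f))"
proof -
  have d1: "\<not> degree f = 1" using assms(2) by simp
  show ?thesis
    unfolding disc_def Let_def if_not_P[OF d1] assms(1) to_ac_1 power_one mult_1_left Drec_index ..
qed

section \<open>Frobenius\<close>

context
  fixes q :: nat and k :: nat
  assumes qk: "card (UNIV :: 'a::{finite,field} set) = 2 ^ k"
begin

private lemma char2_a: "(2::'a) = 0" using char2[of] qk by blast

lemma char2_ac: "(2::'a alg_closure) = 0"
proof -
  have "to_ac (2::'a) = 2" by simp
  thus ?thesis using char2_a by simp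
qed

definition frob :: "'a alg_closure \<Rightarrow> 'a alg_closure" where
  "frob z = z ^ card (UNIV :: 'a set)"

lemma frob_add: "frob (x + y) = frob x + frob y"
  unfolding frob_def qk by (rule pow2k_add_char2[OF char2_ac])

lemma frob_mult: "frob (x * y) = frob x * frob y"
  unfolding frob_def by (simp add: power_mult_distrib)

lemma frob_0: "frob 0 = 0"
  unfolding frob_def qk by simp

lemma frob_1: "frob 1 = 1"
  unfolding frob_def by simp

lemma diff_ac: "(x::'a alg_closure) - y = x + y"
proof -
  have "- y = y" by (rule neg_char2[OF char2_ac])
  thus ?thesis by (metis diff_conv_add_uminus)
qed

lemma frob_diff: "frob (x - y) = frob x - frob y"
  by (simp add: diff_ac frob_add)

lemma frob_uminus: "frob (- x) = - frob x"
  using frob_diff[of 0 x] by (simp add: frob_0)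

lemma frob_to_ac: "frob (to_ac a) = to_ac a"
  unfolding frob_def by (simp add: frob_id to_ac_power[symmetric] del: to_ac_power)

lemma roots_frob:
  fixes f :: "'a poly"
  assumes "lead_coeff f = 1"
  shows "mset (map frob (disc_roots f)) = mset (disc_roots f)"
proof -
  let ?xs = "disc_roots f"
  have F: "map_poly to_ac f = (\<Prod>x\<leftarrow>?xs. [:-x, 1:])" by (rule monic_roots(1)[OF assms])
  have fixF: "map_poly frob (map_poly to_ac f) = map_poly to_ac f"
    by (rule poly_eqI) (simp add: coeff_map_poly frob_0 frob_to_ac)
  have "map_poly frob (\<Prod>x\<leftarrow>?xs. [:-x, 1:]) = (\<Prod>x\<leftarrow>?xs. map_poly frob [:-x, 1:])"
    by (subst map_poly_hom_prod_list) (simp_all add: frob_0 frob_1 frob_add frob_mult o_def)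
  also have "\<dots> = (\<Prod>x\<leftarrow>?xs. [:-frob x, 1:])"
    by (simp add: map_poly_pCons frob_0 frob_1 frob_uminus)
  also have "\<dots> = (\<Prod>y\<leftarrow>map frob ?xs. [:-y, 1:])" by (simp add: o_def)
  finally have "(\<Prod>y\<leftarrow>map frob ?xs. [:-y, 1:]) = (\<Prod>x\<leftarrow>?xs. [:-x, 1:])"
    using fixF F by simp
  thus ?thesis by (rule lin_prod_unique)
qed

lemma fixed_in_range:
  assumes "(z::'a alg_closure) ^ card (UNIV :: 'a set) = z"
  shows "z \<in> range to_ac"
proof -
  let ?q = "card (UNIV :: 'a set)"
  have q2: "?q \<ge> 2"
  proof -
    have "?q \<noteq> 0" by (simp add: card_gt_0_iff)
    moreover have "?q \<noteq> 1"
    proof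
      assume "?q = 1"
      hence "(UNIV :: 'a set) = {0}" by (metis card_1_singletonE singletonD UNIV_I)
      hence "(1::'a) = 0" by blast
      thus False by simp
    qed
    ultimately show ?thesis by linarith
  qed
  define P where "P = monom (1::'a alg_closure) ?q - [:0, 1:]"
  have cP: "coeff P ?q = 1" using q2 by (simp add: P_def coeff_pCons split: nat.splits)
  hence Pnz: "P \<noteq> 0" by auto
  have dP: "degree P \<le> ?q"
    by (rule degree_le) (use q2 in \<open>auto simp: P_def coeff_pCons split: nat.splits\<close>)
  have polyP: "poly P w = w ^ ?q - w" for w by (simp add: P_def poly_monom)
  let ?S = "{w. poly P w = 0}"
  have finS: "finite ?S" using Pnz by (rule poly_roots_finite)
  have cardS: "card ?S \<le> ?q" using card_poly_roots_bound[OF Pnz] dP by linarith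
  have sub: "range to_ac \<subseteq> ?S"
    by (auto simp: polyP frob_id to_ac_power[symmetric] simp del: to_ac_power)
  have cr: "card (range (to_ac :: 'a \<Rightarrow> _)) = ?q" using card_image[OF inj_to_ac] by simp
  have "range to_ac = ?S" using card_seteq[OF finS sub] cardS cr by simp
  moreover have "z \<in> ?S" using assms by (simp add: polyP)
  ultimately show ?thesis by simp
qed

lemma Drec_roots_in_range:
  fixes f :: "'a poly"
  assumes "lead_coeff f = 1"
  shows "Drec (disc_roots f) \<in> range to_ac"
proof -
  let ?xs = "disc_roots f"
  have "frob (Drec ?xs) = Drec (map frob ?xs)"
    by (rule Drec_map_hom[symmetric]) (simp_all add: frob_1 frob_mult frob_diff)
  also have "\<dots> = Drec ?xs" by (rule Drec_mset[OF roots_frob[OF assms]])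
  finally show ?thesis by (intro fixed_in_range) (simp add: frob_def)
qed

lemma to_ac_disc:
  fixes f :: "'a poly"
  assumes "lead_coeff f = 1" "degree f \<ge> 2"
  shows "to_ac (disc f) = Drec (disc_roots f)"
  using disc_monic[OF assms] Drec_roots_in_range[OF assms(1)] by (simp add: to_ac_of_ac)

lemma disc_zero_iff:
  fixes f :: "'a poly"
  assumes "lead_coeff f = 1" "degree f \<ge> 2"
  shows "disc f = 0 \<longleftrightarrow> \<not> distinct (disc_roots f)"
proof -
  have "disc f = 0 \<longleftrightarrow> to_ac (disc f) = 0" by simp
  also have "\<dots> \<longleftrightarrow> Drec (disc_roots f) = 0" by (simp add: to_ac_disc[OF assms])
  finally show ?thesis by (simp add: Drec_zero_iff)
qed

end

section \<open>Coprimality via Bezout, and a gcd\<close>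

definition copr :: "'a::field poly \<Rightarrow> 'a poly \<Rightarrow> bool" where
  "copr A B \<longleftrightarrow> (\<exists>u v. u * A + v * B = 1)"

lemma copr_sym: "copr A B \<longleftrightarrow> copr B A"
  unfolding copr_def by (metis add.commute)

definition isg :: "'a::field poly \<Rightarrow> 'a poly \<Rightarrow> 'a poly \<Rightarrow> bool" where
  "isg D A B \<longleftrightarrow> lead_coeff D = 1 \<and> D dvd A \<and> D dvd B \<and> (\<exists>u v. D = u * A + v * B)"

lemma gcd_exists:
  fixes A B :: "'a::field poly"
  assumes "A \<noteq> 0"
  shows "\<exists>D. isg D A B"
proof -
  define I where "I = {p. p \<noteq> 0 \<and> (\<exists>u v. p = u * A + v * B)}"
  have "A = 1 * A + 0 * B" by simp
  hence AI: "A \<in> I" using assms unfolding I_def by blast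
  define n where "n = (LEAST n. \<exists>p\<in>I. degree p = n)"
  have ex: "\<exists>n. \<exists>p\<in>I. degree p = n" using AI by blast
  have "\<exists>p\<in>I. degree p = n" unfolding n_def using LeastI_ex[of "\<lambda>n. \<exists>p\<in>I. degree p = n", OF ex] .
  then obtain g where gI: "g \<in> I" and dg: "degree g = n" by blast
  have min: "degree g \<le> degree p" if "p \<in> I" for p
  proof -
    have "\<exists>q\<in>I. degree q = degree p" using that by blast
    hence "n \<le> degree p" unfolding n_def by (rule Least_le)
    thus ?thesis using dg by simp
  qed
  obtain u v where guv: "g = u * A + v * B" using gI unfolding I_def by blast
  have gnz: "g \<noteq> 0" using gI unfolding I_def by blast
  have dv: "g dvd C" if C: "C = u' * A + v' * B" for C u' v'
  proof (rule ccontr)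
    assume nd: "\<not> g dvd C"
    define r where "r = C mod g"
    have rnz: "r \<noteq> 0" using nd unfolding r_def by (simp add: mod_eq_0_iff_dvd)
    have "r = C - (C div g) * g" unfolding r_def by (simp add: minus_div_mult_eq_mod)
    also have "\<dots> = (u' - (C div g) * u) * A + (v' - (C div g) * v) * B"
      unfolding C guv by (simp add: algebra_simps)
    finally have "r \<in> I" using rnz unfolding I_def by blast
    hence "degree g \<le> degree r" by (rule min)
    moreover have "degree r < degree g" unfolding r_def using degree_mod_less'[OF gnz] rnz r_def by blast
    ultimately show False by simp
  qed
  have gA: "g dvd A" by (rule dv[of A 1 0]) simp
  have gB: "g dvd B" by (rule dv[of B 0 1]) simp
  define c where "c = inverse (lead_coeff g)"
  have c0: "c \<noteq> 0" using gnz by (simp add: c_def)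
  define D where "D = smult c g"
  have "lead_coeff D = 1" using gnz by (simp add: D_def c_def)
  moreover have "D dvd A" "D dvd B" using gA gB c0 by (simp_all add: D_def smult_dvd_iff)
  moreover have "D = smult c u * A + smult c v * B" by (simp add: D_def guv smult_add_right)
  ultimately show ?thesis unfolding isg_def by blast
qed

lemma monic_dvd_antisym:
  fixes p q :: "'a::field poly"
  assumes "lead_coeff p = 1" "lead_coeff q = 1" "p dvd q" "q dvd p"
  shows "p = q"
proof -
  obtain k where k: "q = p * k" using assms(3) by (elim dvdE)
  obtain l where l: "p = q * l" using assms(4) by (elim dvdE)
  have p0: "p \<noteq> 0" "q \<noteq> 0" using assms by auto
  have k0: "k \<noteq> 0" "l \<noteq> 0"
  proof -
    show "k \<noteq> 0" using p0(2) unfolding k by auto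
    show "l \<noteq> 0" using p0(1) unfolding l by auto
  qed
  have "degree q = degree p + degree k" using k p0 k0 by (simp add: degree_mult_eq)
  moreover have "degree p = degree q + degree l" using l p0 k0 by (simp add: degree_mult_eq)
  ultimately have "degree k = 0" by simp
  then obtain c where c: "k = [:c:]" by (metis degree_eq_zeroE)
  have "lead_coeff q = lead_coeff p * c" using k c by (simp add: lead_coeff_mult)
  hence "c = 1" using assms by simp
  thus ?thesis using k c by simp
qed

lemma isg_unique:
  assumes "isg D A B" "isg E A B"
  shows "D = E"
proof -
  have "D dvd E" using assms unfolding isg_def by (auto intro!: dvd_add dvd_mult)
  moreover have "E dvd D" using assms unfolding isg_def by (auto intro!: dvd_add dvd_mult)
  ultimately show ?thesis using assms monic_dvd_antisym unfolding isg_def by blast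
qed

definition mygcd :: "'a::field poly \<Rightarrow> 'a poly \<Rightarrow> 'a poly" where
  "mygcd A B = (THE D. isg D A B)"

lemma mygcd: "A \<noteq> 0 \<Longrightarrow> isg (mygcd A B) A B"
  unfolding mygcd_def by (rule theI') (use gcd_exists isg_unique in blast)

lemma mygcd_eqI: "isg D A B \<Longrightarrow> mygcd A B = D"
  unfolding mygcd_def using isg_unique by blast

lemma not_copr_common:
  fixes f g :: "'a::field poly"
  assumes "f \<noteq> 0" "\<not> copr f g"
  shows "\<exists>D. lead_coeff D = 1 \<and> degree D \<ge> 1 \<and> D dvd f \<and> D dvd g"
proof -
  obtain D where D: "isg D f g" using gcd_exists[OF assms(1)] by blast
  have "degree D \<noteq> 0"
  proof
    assume "degree D = 0"
    then obtain c where "D = [:c:]" by (metis degree_eq_zeroE)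
    hence "D = 1" using D unfolding isg_def by (simp add: one_pCons)
    thus False using D assms(2) unfolding isg_def copr_def by metis
  qed
  thus ?thesis using D unfolding isg_def by auto
qed

section \<open>Repeated roots\<close>

lemma not_distinct_remove1: "\<not> distinct xs \<Longrightarrow> \<exists>a. a \<in> set (remove1 a xs)"
proof (induction xs)
  case Nil thus ?case by simp
next
  case (Cons x xs)
  show ?case
  proof (cases "x \<in> set xs")
    case True thus ?thesis by (intro exI[of _ x]) simp
  next
    case False
    hence "\<not> distinct xs" using Cons.prems by simp
    then obtain a where a: "a \<in> set (remove1 a xs)" using Cons.IH by blast
    have "a \<in> set (remove1 a (x # xs))"
      using a set_remove1_subset[of a xs] by auto
    thus ?thesis by blast
  qed
qed

lemma pderiv_lin_prod_at:
  fixes xs :: "'b::field list"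
  assumes "a \<in> set xs"
  shows "poly (pderiv (\<Prod>x\<leftarrow>xs. [:-x, 1:])) a = (\<Prod>y\<leftarrow>remove1 a xs. a - y)"
proof -
  define G where "G = (\<Prod>x\<leftarrow>remove1 a xs. [:-x, 1:])"
  have "(\<Prod>x\<leftarrow>xs. [:-x, 1:]) = [:-a, 1:] * G"
    unfolding G_def by (rule prod_list_remove1[OF assms])
  hence "pderiv (\<Prod>x\<leftarrow>xs. [:-x, 1:]) = [:-a, 1:] * pderiv G + G * pderiv [:-a, 1:]"
    by (simp only: pderiv_mult)
  hence "poly (pderiv (\<Prod>x\<leftarrow>xs. [:-x, 1:])) a = poly G a"
    by (simp add: pderiv_pCons)
  thus ?thesis by (simp add: G_def poly_lin_prod)
qed

lemma distinct_iff_no_double_root: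
  fixes xs :: "'b::field list"
  shows "\<not> distinct xs \<longleftrightarrow>
     (\<exists>a. poly (\<Prod>x\<leftarrow>xs. [:-x, 1:]) a = 0 \<and> poly (pderiv (\<Prod>x\<leftarrow>xs. [:-x, 1:])) a = 0)"
proof
  assume "\<not> distinct xs"
  then obtain a where a: "a \<in> set (remove1 a xs)" using not_distinct_remove1 by blast
  hence ax: "a \<in> set xs" using set_remove1_subset by fastforce
  have "poly (\<Prod>x\<leftarrow>xs. [:-x, 1:]) a = 0" using ax by (auto simp: poly_lin_prod prod_list_zero_iff)
  moreover have "poly (pderiv (\<Prod>x\<leftarrow>xs. [:-x, 1:])) a = 0"
    using a by (auto simp: pderiv_lin_prod_at[OF ax] prod_list_zero_iff)
  ultimately show "\<exists>a. poly (\<Prod>x\<leftarrow>xs. [:-x, 1:]) a = 0 \<and> poly (pderiv (\<Prod>x\<leftarrow>xs. [:-x, 1:])) a = 0"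
    by blast
next
  assume "\<exists>a. poly (\<Prod>x\<leftarrow>xs. [:-x, 1:]) a = 0 \<and> poly (pderiv (\<Prod>x\<leftarrow>xs. [:-x, 1:])) a = 0"
  then obtain a where a1: "poly (\<Prod>x\<leftarrow>xs. [:-x, 1:]) a = 0"
    and a2: "poly (pderiv (\<Prod>x\<leftarrow>xs. [:-x, 1:])) a = 0" by blast
  have ax: "a \<in> set xs" using a1 by (auto simp: poly_lin_prod prod_list_zero_iff)
  have "a \<in> set (remove1 a xs)" using a2 by (auto simp: pderiv_lin_prod_at[OF ax] prod_list_zero_iff)
  thus "\<not> distinct xs" by auto
qed

lemma poly_map_dvd:
  assumes "D dvd f" "poly (map_poly to_ac D) a = 0"
  shows "poly (map_poly to_ac f) a = 0"
proof -
  obtain k where "f = D * k" using assms(1) by (elim dvdE)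
  thus ?thesis using assms(2) by (simp add: map_to_ac_mult)
qed

lemma not_copr_iff_common_root:
  fixes f g :: "'a::field poly"
  assumes "f \<noteq> 0"
  shows "\<not> copr f g \<longleftrightarrow> (\<exists>a. poly (map_poly to_ac f) a = 0 \<and> poly (map_poly to_ac g) a = 0)"
proof
  assume "\<not> copr f g"
  then obtain D where D: "lead_coeff D = 1" "degree D \<ge> 1" "D dvd f" "D dvd g"
    using not_copr_common[OF assms] by blast
  have "degree (map_poly to_ac D) > 0" using D by simp
  then obtain a where "poly (map_poly to_ac D) a = 0" using alg_closed_imp_poly_has_root by blast
  thus "\<exists>a. poly (map_poly to_ac f) a = 0 \<and> poly (map_poly to_ac g) a = 0"
    using poly_map_dvd D by blast
next
  assume "\<exists>a. poly (map_poly to_ac f) a = 0 \<and> poly (map_poly to_ac g) a = 0"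
  then obtain a where a: "poly (map_poly to_ac f) a = 0" "poly (map_poly to_ac g) a = 0" by blast
  show "\<not> copr f g"
  proof
    assume "copr f g"
    then obtain u v where uv: "u * f + v * g = 1" unfolding copr_def by blast
    have "map_poly to_ac (u * f + v * g) = 1" using uv by simp
    hence "map_poly to_ac u * map_poly to_ac f + map_poly to_ac v * map_poly to_ac g = 1"
      by (simp add: map_to_ac_add map_to_ac_mult)
    hence "poly (map_poly to_ac u * map_poly to_ac f + map_poly to_ac v * map_poly to_ac g) a = 1"
      by simp
    thus False using a by simp
  qed
qed

lemma disc_zero_iff_copr:
  fixes f :: "'a::{finite,field} poly"
  assumes qk: "card (UNIV :: 'a set) = 2 ^ k"
    and "lead_coeff f = 1" "degree f \<ge> 2"
  shows "disc f = 0 \<longleftrightarrow> \<not> copr f (pderiv f)"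
proof -
  have f0: "f \<noteq> 0" using assms by auto
  have F: "map_poly to_ac f = (\<Prod>x\<leftarrow>disc_roots f. [:-x, 1:])" by (rule monic_roots(1)[OF assms(2)])
  have "disc f = 0 \<longleftrightarrow> \<not> distinct (disc_roots f)" by (rule disc_zero_iff[OF qk assms(2,3)])
  also have "\<dots> \<longleftrightarrow> (\<exists>a. poly (map_poly to_ac f) a = 0 \<and> poly (pderiv (map_poly to_ac f)) a = 0)"
    unfolding F by (rule distinct_iff_no_double_root)
  also have "\<dots> \<longleftrightarrow> \<not> copr f (pderiv f)"
    unfolding pderiv_map_to_ac by (rule not_copr_iff_common_root[OF f0, symmetric])
  finally show ?thesis .
qed

section \<open>Characteristic two polynomial identities\<close>

context
  fixes dummy :: "'a::field itself"
  assumes two: "(2::'a) = 0"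
begin

lemma two_poly: "(2::'a poly) = 0" by (rule poly_char2[OF two])

lemma pp0: "(p::'a poly) + p = 0"
proof -
  have "p + p = 2 * p" by (rule mult_2[symmetric])
  also have "\<dots> = 0 * p" by (simp only: two_poly)
  finally show ?thesis by simp
qed

lemma sq_diff_poly: "((a::'a poly) - b) ^ 2 = a ^ 2 - b ^ 2"
proof -
  have "(a - b) ^ 2 = a ^ 2 + b ^ 2 - 2 * a * b" by (rule power2_diff)
  also have "2 * a * b = 0" by (simp only: two_poly mult_zero_left)
  also have "b ^ 2 = - (b ^ 2)" using neg_char2[OF two_poly, of "b^2"] by simp
  finally show ?thesis by simp
qed

lemma sq_sum_poly: "((a::'a poly) + b) ^ 2 = a ^ 2 + b ^ 2"
  by (rule sq_add_char2[OF two_poly])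

lemma pderiv_X: "pderiv [:0, 1::'a:] = 1"
  by (simp add: pderiv_pCons one_pCons)

lemma pderiv_AB: "pderiv ((A::'a poly) ^ 2 + [:0, 1:] * B ^ 2) = B ^ 2"
proof -
  have "pderiv (A ^ 2) = A * pderiv A + A * pderiv A" by (simp add: power2_eq_square pderiv_mult)
  also have "\<dots> = 0" by (rule pp0)
  finally have a: "pderiv (A ^ 2) = 0" .
  have "pderiv (B ^ 2) = B * pderiv B + B * pderiv B" by (simp add: power2_eq_square pderiv_mult)
  also have "\<dots> = 0" by (rule pp0)
  finally have b: "pderiv (B ^ 2) = 0" .
  have "pderiv ([:0, 1:] * B ^ 2) = [:0, 1:] * pderiv (B ^ 2) + B ^ 2 * pderiv [:0, 1:]"
    by (rule pderiv_mult)
  also have "\<dots> = B ^ 2" using b pderiv_X by simp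
  finally show ?thesis using a by (simp add: pderiv_add)
qed

lemma copr_AB: "copr ((A::'a poly) ^ 2 + [:0, 1:] * B ^ 2) (B ^ 2) \<longleftrightarrow> copr A B"
proof
  assume "copr (A ^ 2 + [:0, 1:] * B ^ 2) (B ^ 2)"
  then obtain u v where uv: "u * (A ^ 2 + [:0, 1:] * B ^ 2) + v * B ^ 2 = 1" unfolding copr_def by blast
  have "(u * A) * A + (u * [:0, 1:] * B + v * B) * B = u * (A ^ 2 + [:0, 1:] * B ^ 2) + v * B ^ 2"
    by (simp add: power2_eq_square algebra_simps)
  thus "copr A B" unfolding copr_def using uv by metis
next
  assume "copr A B"
  then obtain u v where uv: "u * A + v * B = 1" unfolding copr_def by blast
  have "u ^ 2 * (A ^ 2 + [:0, 1:] * B ^ 2) + (v ^ 2 - u ^ 2 * [:0, 1:]) * B ^ 2 = (u * A) ^ 2 + (v * B) ^ 2"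
    by (simp add: power2_eq_square algebra_simps)
  also have "\<dots> = (u * A + v * B) ^ 2" by (rule sq_sum_poly[symmetric])
  also have "\<dots> = 1" using uv by simp
  finally show "copr (A ^ 2 + [:0, 1:] * B ^ 2) (B ^ 2)" unfolding copr_def by blast
qed

lemma inj_AB:
  assumes "(A::'a poly) ^ 2 + [:0, 1:] * B ^ 2 = C ^ 2 + [:0, 1:] * D ^ 2"
  shows "A = C \<and> B = D"
proof -
  have e: "(A - C) ^ 2 = [:0, 1:] * (D - B) ^ 2"
  proof -
    have "A ^ 2 - C ^ 2 = (A ^ 2 + [:0, 1:] * B ^ 2) - (C ^ 2 + [:0, 1:] * B ^ 2)" by simp
    also have "\<dots> = (C ^ 2 + [:0, 1:] * D ^ 2) - (C ^ 2 + [:0, 1:] * B ^ 2)" by (simp only: assms)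
    also have "\<dots> = [:0, 1:] * (D ^ 2 - B ^ 2)" by (simp only: right_diff_distrib) simp
    finally have "A ^ 2 - C ^ 2 = [:0, 1:] * (D ^ 2 - B ^ 2)" .
    thus ?thesis by (simp add: sq_diff_poly)
  qed
  have BD: "B = D"
  proof (rule ccontr)
    assume "B \<noteq> D"
    hence nz: "D - B \<noteq> 0" by simp
    have dr: "degree ([:0, 1:] * (D - B) ^ 2) = 1 + 2 * degree (D - B)"
      using nz by (simp add: degree_mult_eq degree_power_eq)
    show False
    proof (cases "A = C")
      case True
      hence "[:0, 1:] * (D - B) ^ 2 = 0" using e by simp
      thus False using nz by simp
    next
      case False
      hence "degree ((A - C) ^ 2) = 2 * degree (A - C)" by (simp add: degree_power_eq)
      moreover have "degree ((A - C) ^ 2) = 1 + 2 * degree (D - B)" using e dr by simp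
      ultimately show False by presburger
    qed
  qed
  hence "(A - C) ^ 2 = 0" using e by simp
  hence "A = C" by simp
  thus ?thesis using BD by simp
qed

end

definition TT :: "nat \<Rightarrow> nat \<Rightarrow> ('a::field poly \<times> 'a poly) set" where
  "TT c k = Mon k \<times> Bd (k + c)"

definition CC :: "nat \<Rightarrow> nat \<Rightarrow> ('a::field poly \<times> 'a poly) set" where
  "CC c k = {x \<in> TT c k. copr (fst x) (snd x)}"

lemma card_TT:
  "finite (TT c k :: ('a::{finite,field} poly \<times> 'a poly) set) \<and>
   card (TT c k :: ('a poly \<times> 'a poly) set) = card (UNIV::'a set) ^ (2 * k + c)"
  using card_Mon[of k, where 'a='a] card_Bd[of "k + c", where 'a='a]
  by (simp add: TT_def card_cartesian_product power_add[symmetric] mult_2 add.assoc)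

lemma monic_mult_deg:
  fixes D P :: "'a::field poly"
  assumes "lead_coeff D = 1" "lead_coeff P = 1"
  shows "lead_coeff (D * P) = 1 \<and> degree (D * P) = degree D + degree P"
proof -
  have "D \<noteq> 0" "P \<noteq> 0" using assms by auto
  hence "degree (D * P) = degree D + degree P" by (rule degree_mult_eq)
  moreover have "lead_coeff (D * P) = lead_coeff D * lead_coeff P" by (rule lead_coeff_mult)
  ultimately show ?thesis using assms by simp
qed

definition Phi :: "nat \<times> 'a::field poly \<times> 'a poly \<times> 'a poly \<Rightarrow> 'a poly \<times> 'a poly" where
  "Phi x = (case x of (j, D, P, Q) \<Rightarrow> (D * P, D * Q))"

definition Dom :: "nat \<Rightarrow> nat \<Rightarrow> (nat \<times> 'a::field poly \<times> 'a poly \<times> 'a poly) set" where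
  "Dom c k = (SIGMA j:{..k}. (Mon j :: 'a poly set) \<times> CC c (k - j))"

lemma isg_mult:
  fixes D P Q :: "'a::field poly"
  assumes "lead_coeff D = 1" "copr P Q"
  shows "isg D (D * P) (D * Q)"
proof -
  obtain u v where "u * P + v * Q = 1" using assms(2) unfolding copr_def by blast
  hence "D = u * (D * P) + v * (D * Q)" by (metis distrib_left mult.left_commute mult.right_neutral)
  thus ?thesis using assms(1) unfolding isg_def by auto
qed

lemma Phi_inj: "inj_on Phi (Dom c k :: (nat \<times> 'a::field poly \<times> 'a poly \<times> 'a poly) set)"
proof (rule inj_onI)
  fix x y
  assume ax: "x \<in> (Dom c k :: (nat \<times> 'a poly \<times> 'a poly \<times> 'a poly) set)"
     and bx: "y \<in> (Dom c k :: (nat \<times> 'a poly \<times> 'a poly \<times> 'a poly) set)"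
     and ex: "Phi x = Phi y"
  obtain j D P Q where xe: "x = (j, D, P, Q)" by (metis prod.collapse)
  obtain j' D' P' Q' where ye: "y = (j', D', P', Q')" by (metis prod.collapse)
  have a: "(j, D, P, Q) \<in> (Dom c k :: (nat \<times> 'a poly \<times> 'a poly \<times> 'a poly) set)" using ax xe by simp
  have b: "(j', D', P', Q') \<in> (Dom c k :: (nat \<times> 'a poly \<times> 'a poly \<times> 'a poly) set)" using bx ye by simp
  have e: "Phi (j, D, P, Q) = Phi (j', D', P', Q')" using ex xe ye by simp
  have D: "lead_coeff D = 1" "degree D = j" "copr P Q" using a by (auto simp: Dom_def Mon_def CC_def)
  have D': "lead_coeff D' = 1" "degree D' = j'" "copr P' Q'" using b by (auto simp: Dom_def Mon_def CC_def)
  have e1: "D * P = D' * P'" and e2: "D * Q = D' * Q'" using e by (auto simp: Phi_def)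
  have "mygcd (D * P) (D * Q) = D" by (rule mygcd_eqI[OF isg_mult[OF D(1) D(3)]])
  moreover have "mygcd (D' * P') (D' * Q') = D'" by (rule mygcd_eqI[OF isg_mult[OF D'(1) D'(3)]])
  ultimately have DD: "D = D'" using e1 e2 by simp
  have D0: "D \<noteq> 0" using D by auto
  have "P = P'" using e1 D0 DD by simp
  moreover have "Q = Q'" using e2 D0 DD by simp
  ultimately show "x = y" using DD D D' xe ye by simp
qed

lemma Phi_image: "Phi ` (Dom c k :: (nat \<times> 'a::field poly \<times> 'a poly \<times> 'a poly) set) = TT c k"
proof
  show "Phi ` (Dom c k :: (nat \<times> 'a poly \<times> 'a poly \<times> 'a poly) set) \<subseteq> TT c k"
  proof
    fix x assume "x \<in> Phi ` (Dom c k :: (nat \<times> 'a poly \<times> 'a poly \<times> 'a poly) set)"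
    then obtain y where y: "y \<in> (Dom c k :: (nat \<times> 'a poly \<times> 'a poly \<times> 'a poly) set)" and xy: "x = Phi y"
      by blast
    obtain j D P Q where ye: "y = (j, D, P, Q)" by (metis prod.collapse)
    have a: "(j, D, P, Q) \<in> (Dom c k :: (nat \<times> 'a poly \<times> 'a poly \<times> 'a poly) set)" using y ye by simp
    have jk: "j \<le> k" and D: "lead_coeff D = 1" "degree D = j" and P: "lead_coeff P = 1" "degree P = k - j"
      and Q: "Q \<in> Bd (k - j + c)"
      using a by (auto simp: Dom_def Mon_def CC_def TT_def)
    have "lead_coeff (D * P) = 1" using monic_mult_deg[OF D(1) P(1)] by blast
    moreover have "degree (D * P) = k" using monic_mult_deg[OF D(1) P(1)] D P jk by simp
    ultimately have DP: "D * P \<in> Mon k" unfolding Mon_def by blast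
    have "D * Q \<in> Bd (k + c)"
    proof (cases "Q = 0")
      case True thus ?thesis by (simp add: Bd_def)
    next
      case False
      have D0: "D \<noteq> 0" using D(1) by auto
      hence "degree (D * Q) = j + degree Q" using False D(2) by (simp add: degree_mult_eq)
      moreover have "degree Q < k - j + c" using Q False by (simp add: Bd_def)
      ultimately have "degree (D * Q) < k + c" using jk by linarith
      thus ?thesis by (simp add: Bd_def)
    qed
    thus "x \<in> TT c k" using DP xy ye by (simp add: Phi_def TT_def)
  qed
next
  show "TT c k \<subseteq> Phi ` (Dom c k :: (nat \<times> 'a poly \<times> 'a poly \<times> 'a poly) set)"
  proof clarify
    fix A B :: "'a poly" assume ab: "(A, B) \<in> TT c k"
    have A: "lead_coeff A = 1" "degree A = k" and B: "B \<in> Bd (k + c)" using ab by (auto simp: TT_def Mon_def)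
    have A0: "A \<noteq> 0" using A by auto
    define D where "D = mygcd A B"
    have g: "isg D A B" unfolding D_def by (rule mygcd[OF A0])
    obtain P where P: "A = D * P" using g unfolding isg_def by (auto elim: dvdE)
    obtain Q where Q: "B = D * Q" using g unfolding isg_def by (auto elim: dvdE)
    obtain u v where uv: "D = u * A + v * B" using g unfolding isg_def by blast
    have D1: "lead_coeff D = 1" using g unfolding isg_def by blast
    have D0: "D \<noteq> 0" using D1 by auto
    have "D * 1 = D * (u * P + v * Q)" using uv P Q by (simp add: algebra_simps)
    hence "u * P + v * Q = 1" using D0 by (metis mult_left_cancel)
    hence cop: "copr P Q" unfolding copr_def by blast
    have P0: "P \<noteq> 0" using A0 P by auto
    have P1: "lead_coeff P = 1" using A D1 P by (simp add: lead_coeff_mult)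
    have dA: "degree A = degree D + degree P" using P D0 P0 by (simp add: degree_mult_eq)
    define j where "j = degree D"
    have jk: "j \<le> k" using dA A by (simp add: j_def)
    have dP: "degree P = k - j" using dA A by (simp add: j_def)
    have QB: "Q \<in> Bd (k - j + c)"
    proof (cases "Q = 0")
      case True thus ?thesis by (simp add: Bd_def)
    next
      case False
      hence "B \<noteq> 0" using Q D0 by simp
      hence "degree B < k + c" using B by (simp add: Bd_def)
      moreover have "degree B = j + degree Q" using Q D0 False by (simp add: degree_mult_eq j_def)
      ultimately have "degree Q < k - j + c" using jk by linarith
      thus ?thesis by (simp add: Bd_def)
    qed
    have "(j, D, P, Q) \<in> (Dom c k :: (nat \<times> 'a poly \<times> 'a poly \<times> 'a poly) set)"
      using jk D1 P1 dP QB cop by (simp add: Dom_def Mon_def CC_def TT_def j_def)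
    moreover have "(A, B) = Phi (j, D, P, Q)" using P Q by (simp add: Phi_def)
    ultimately show "(A, B) \<in> Phi ` (Dom c k :: (nat \<times> 'a poly \<times> 'a poly \<times> 'a poly) set)" by blast
  qed
qed

lemma card_sum_CC:
  "(\<Sum>j\<le>k. card (UNIV::'a::{finite,field} set) ^ j * card (CC c (k - j) :: ('a poly \<times> 'a poly) set))
     = card (UNIV::'a set) ^ (2 * k + c)"
proof -
  have finCC: "finite (CC c i :: ('a poly \<times> 'a poly) set)" for i
    using card_TT[of c i, where 'a='a] by (simp add: CC_def)
  have "card (TT c k :: ('a poly \<times> 'a poly) set) = card (Phi ` (Dom c k :: (nat \<times> 'a poly \<times> 'a poly \<times> 'a poly) set))"
    by (simp add: Phi_image)
  also have "\<dots> = card (Dom c k :: (nat \<times> 'a poly \<times> 'a poly \<times> 'a poly) set)"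
    by (rule card_image[OF Phi_inj])
  also have "\<dots> = (\<Sum>j\<le>k. card ((Mon j :: 'a poly set) \<times> (CC c (k - j) :: ('a poly \<times> 'a poly) set)))"
    unfolding Dom_def by (rule card_SigmaI) (auto simp: card_Mon finCC)
  also have "\<dots> = (\<Sum>j\<le>k. card (UNIV::'a set) ^ j * card (CC c (k - j) :: ('a poly \<times> 'a poly) set))"
    by (simp add: card_cartesian_product card_Mon)
  finally show ?thesis using card_TT[of c k, where 'a='a] by simp
qed

lemma card_TT_minus_CC:
  "card (TT c (Suc k) - CC c (Suc k) :: ('a::{finite,field} poly \<times> 'a poly) set)
     = card (UNIV::'a set) ^ (2 * k + c + 1)"
proof -
  let ?q = "card (UNIV::'a set)"
  let ?a = "\<lambda>i. card (CC c i :: ('a poly \<times> 'a poly) set)"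
  have "(\<Sum>j\<le>Suc k. ?q ^ j * ?a (Suc k - j)) = ?q ^ 0 * ?a (Suc k) + (\<Sum>j\<le>k. ?q ^ Suc j * ?a (Suc k - Suc j))"
    by (simp only: sum.atMost_Suc_shift) simp
  also have "(\<Sum>j\<le>k. ?q ^ Suc j * ?a (Suc k - Suc j)) = ?q * (\<Sum>j\<le>k. ?q ^ j * ?a (k - j))"
    by (simp add: sum_distrib_left mult.assoc)
  also have "(\<Sum>j\<le>k. ?q ^ j * ?a (k - j)) = ?q ^ (2 * k + c)" by (rule card_sum_CC)
  finally have e1: "(\<Sum>j\<le>Suc k. ?q ^ j * ?a (Suc k - j)) = ?q ^ 0 * ?a (Suc k) + ?q * ?q ^ (2 * k + c)" .
  have e0: "(\<Sum>j\<le>Suc k. ?q ^ j * ?a (Suc k - j)) = ?q ^ (2 * Suc k + c)" by (rule card_sum_CC)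
  have e: "?q ^ 0 * ?a (Suc k) + ?q * ?q ^ (2 * k + c) = ?q ^ (2 * Suc k + c)" by (metis e1 e0)
  have sub: "CC c (Suc k) \<subseteq> (TT c (Suc k) :: ('a poly \<times> 'a poly) set)" by (auto simp: CC_def)
  have fin: "finite (TT c (Suc k) :: ('a poly \<times> 'a poly) set)" using card_TT by blast
  have "card (TT c (Suc k) - CC c (Suc k) :: ('a poly \<times> 'a poly) set) = ?q ^ (2 * Suc k + c) - ?a (Suc k)"
    using card_Diff_subset[OF finite_subset[OF sub fin] sub] card_TT[of c "Suc k", where 'a='a] by simp
  also have "\<dots> = ?q * ?q ^ (2 * k + c)" using e by simp
  finally show ?thesis by simp
qed

section \<open>Counting polynomials with a repeated factor\<close>

lemma monic_add_small:
  fixes p q :: "'a::field poly"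
  assumes "lead_coeff p = 1" "degree p = n" "q = 0 \<or> degree q < n"
  shows "p + q \<in> Mon n"
proof (cases "q = 0")
  case True thus ?thesis using assms unfolding Mon_def by simp
next
  case False
  hence dq: "degree q < degree p" using assms by simp
  have d: "degree (p + q) = n" using degree_add_eq_left[OF dq] assms by simp
  have "coeff (p + q) n = coeff p n + coeff q n" by simp
  also have "coeff q n = 0" using dq assms by (simp add: coeff_eq_0)
  also have "coeff p n = 1" using assms by simp
  finally have "coeff (p + q) (degree (p + q)) = 1" using d by simp
  thus ?thesis using d unfolding Mon_def by simp
qed

lemma sq_Mon:
  fixes P :: "'a::field poly"
  assumes "P \<in> Mon k"
  shows "lead_coeff (P ^ 2) = 1 \<and> degree (P ^ 2) = 2 * k"
    and "lead_coeff ([:0, 1:] * P ^ 2) = 1 \<and> degree ([:0, 1:] * P ^ 2) = 2 * k + 1"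
proof -
  have P: "lead_coeff P = 1" "degree P = k" using assms by (auto simp: Mon_def)
  hence P0: "P \<noteq> 0" by auto
  have l: "lead_coeff (P ^ 2) = 1" by (simp add: lead_coeff_power P(1))
  have d: "degree (P ^ 2) = 2 * k" using P0 P(2) by (simp add: degree_power_eq)
  show "lead_coeff (P ^ 2) = 1 \<and> degree (P ^ 2) = 2 * k" using l d by simp
  have P20: "P ^ 2 \<noteq> 0" using P0 by simp
  have "lead_coeff ([:0, 1:] * P ^ 2) = lead_coeff [:0, 1::'a:] * lead_coeff (P ^ 2)"
    by (rule lead_coeff_mult)
  hence l2: "lead_coeff ([:0, 1:] * P ^ 2) = 1" using l by simp
  have d2: "degree ([:0, 1:] * P ^ 2) = 2 * k + 1"
    using degree_mult_eq[of "[:0, 1::'a:]" "P ^ 2"] P20 d by simp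
  show "lead_coeff ([:0, 1:] * P ^ 2) = 1 \<and> degree ([:0, 1:] * P ^ 2) = 2 * k + 1"
    using l2 d2 by simp
qed

lemma sq_small0:
  fixes Q :: "'a::field poly"
  assumes "Q \<in> Bd k"
  shows "[:0, 1:] * Q ^ 2 = 0 \<or> degree ([:0, 1:] * Q ^ 2) < 2 * k"
proof (cases "Q = 0")
  case True thus ?thesis by simp
next
  case False
  hence "degree Q < k" using assms by (simp add: Bd_def)
  moreover have "degree ([:0, 1:] * Q ^ 2) = 1 + 2 * degree Q"
    using False by (simp add: degree_mult_eq degree_power_eq)
  ultimately show ?thesis by simp
qed

lemma sq_small1:
  fixes Q :: "'a::field poly"
  assumes "Q \<in> Bd (k + 1)"
  shows "Q ^ 2 = 0 \<or> degree (Q ^ 2) < 2 * k + 1"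
proof (cases "Q = 0")
  case True thus ?thesis by simp
next
  case False
  hence "degree Q < k + 1" using assms by (simp add: Bd_def)
  moreover have "degree (Q ^ 2) = 2 * degree Q"
    using False by (simp add: degree_power_eq)
  ultimately show ?thesis by simp
qed

definition Psi :: "nat \<Rightarrow> 'a::field poly \<times> 'a poly \<Rightarrow> 'a poly" where
  "Psi c x = (if c = 0 then fst x ^ 2 + [:0, 1:] * snd x ^ 2 else snd x ^ 2 + [:0, 1:] * fst x ^ 2)"

lemma Psi_Mon:
  assumes "c \<le> 1" "x \<in> TT c k"
  shows "Psi c x \<in> Mon (2 * k + c)"
proof -
  obtain P Q where x: "x = (P, Q)" by (cases x)
  have P: "P \<in> Mon k" and Q: "Q \<in> Bd (k + c)" using assms x by (auto simp: TT_def)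
  show ?thesis
  proof (cases "c = 0")
    case True
    have "P ^ 2 + [:0, 1:] * Q ^ 2 \<in> Mon (2 * k)"
      using sq_Mon(1)[OF P] sq_small0[of Q k] Q True by (intro monic_add_small) auto
    thus ?thesis using True x by (simp add: Psi_def)
  next
    case False
    hence c1: "c = 1" using assms by simp
    have "[:0, 1:] * P ^ 2 + Q ^ 2 \<in> Mon (2 * k + 1)"
      using sq_Mon(2)[OF P] sq_small1[of Q k] Q c1 by (intro monic_add_small) auto
    thus ?thesis using c1 x by (simp add: Psi_def add.commute)
  qed
qed

context
  fixes dummy :: "'a::field itself"
  assumes two: "(2::'a) = 0"
begin

lemma Psi_copr:
  fixes x :: "'a poly \<times> 'a poly"
  shows "copr (Psi c x) (pderiv (Psi c x)) \<longleftrightarrow> copr (fst x) (snd x)"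
proof (cases "c = 0")
  case True
  thus ?thesis unfolding Psi_def using pderiv_AB[OF two] copr_AB[OF two] by simp
next
  case False
  thus ?thesis unfolding Psi_def using pderiv_AB[OF two] copr_AB[OF two] copr_sym by simp
qed

lemma Psi_inj: "inj_on (Psi c) (UNIV :: ('a poly \<times> 'a poly) set)"
proof (rule inj_onI)
  fix x y :: "'a poly \<times> 'a poly"
  assume e: "Psi c x = Psi c y"
  obtain P Q where x: "x = (P, Q)" by (cases x)
  obtain P' Q' where y: "y = (P', Q')" by (cases y)
  show "x = y"
  proof (cases "c = 0")
    case True
    hence "P ^ 2 + [:0, 1:] * Q ^ 2 = P' ^ 2 + [:0, 1:] * Q' ^ 2" using e x y by (simp add: Psi_def)
    thus ?thesis using inj_AB[OF two] x y by blast
  next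
    case False
    hence "Q ^ 2 + [:0, 1:] * P ^ 2 = Q' ^ 2 + [:0, 1:] * P' ^ 2" using e x y by (simp add: Psi_def)
    thus ?thesis using inj_AB[OF two] x y by blast
  qed
qed

end

lemma count_nonsq:
  fixes m :: nat
  assumes qk: "card (UNIV :: 'a::{finite,field} set) = 2 ^ k0" and m: "m \<ge> 2"
  shows "card {f :: 'a poly. lead_coeff f = 1 \<and> degree f = m \<and> \<not> copr f (pderiv f)}
           = card (UNIV :: 'a set) ^ (m - 1)"
proof -
  have two: "(2::'a) = 0" using char2 qk by blast
  define c where "c = m mod 2"
  define k where "k = m div 2"
  have mck: "m = 2 * k + c" and c1: "c \<le> 1" by (auto simp: c_def k_def)
  obtain k' where k': "k = Suc k'" using m mck c1 by (cases k) auto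
  let ?T = "TT c k :: ('a poly \<times> 'a poly) set"
  let ?C = "CC c k :: ('a poly \<times> 'a poly) set"
  have finT: "finite ?T" using card_TT by blast
  have injT: "inj_on (Psi c) ?T" using Psi_inj[OF two] by (rule inj_on_subset) simp
  have sub: "Psi c ` ?T \<subseteq> Mon m" using Psi_Mon[OF c1] mck by blast
  have "card (Psi c ` ?T) = card (Mon m :: 'a poly set)"
    using card_image[OF injT] card_TT[of c k, where 'a='a] card_Mon[of m, where 'a='a] mck by simp
  hence img: "Psi c ` ?T = Mon m" using card_subset_eq[OF _ sub] card_Mon by blast
  have "{f :: 'a poly. lead_coeff f = 1 \<and> degree f = m \<and> \<not> copr f (pderiv f)} = Psi c ` (?T - ?C)"
  proof
    show "{f :: 'a poly. lead_coeff f = 1 \<and> degree f = m \<and> \<not> copr f (pderiv f)} \<subseteq> Psi c ` (?T - ?C)"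
    proof
      fix f :: "'a poly" assume f: "f \<in> {f. lead_coeff f = 1 \<and> degree f = m \<and> \<not> copr f (pderiv f)}"
      hence "f \<in> Mon m" unfolding Mon_def by blast
      then obtain x where x: "x \<in> ?T" "f = Psi c x" using img by blast
      hence "x \<notin> ?C" using f Psi_copr[OF two, of c x] by (simp add: CC_def)
      thus "f \<in> Psi c ` (?T - ?C)" using x by blast
    qed
  next
    show "Psi c ` (?T - ?C) \<subseteq> {f :: 'a poly. lead_coeff f = 1 \<and> degree f = m \<and> \<not> copr f (pderiv f)}"
    proof
      fix f assume "f \<in> Psi c ` (?T - ?C)"
      then obtain x where x: "x \<in> ?T" "x \<notin> ?C" "f = Psi c x" by blast
      have "f \<in> Mon m" using x img by blast
      moreover have "\<not> copr f (pderiv f)" using x Psi_copr[OF two, of c x] by (simp add: CC_def)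
      ultimately show "f \<in> {f :: 'a poly. lead_coeff f = 1 \<and> degree f = m \<and> \<not> copr f (pderiv f)}"
        unfolding Mon_def by blast
    qed
  qed
  also have "card (Psi c ` (?T - ?C)) = card (?T - ?C)"
    by (rule card_image) (rule inj_on_subset[OF injT], blast)
  also have "\<dots> = card (UNIV :: 'a set) ^ (2 * k' + c + 1)"
    unfolding k' by (rule card_TT_minus_CC)
  also have "2 * k' + c + 1 = m - 1" using mck k' by simp
  finally show ?thesis .
qed

section \<open>Scaling\<close>

definition sc :: "'a::field \<Rightarrow> 'a poly \<Rightarrow> 'a poly" where
  "sc l f = smult (l ^ degree f) (pcompose f [:0, inverse l:])"

lemma pcompose_lin_lin: "pcompose [:0, a:] [:0, b:] = [:0, a * b::'a::field:]"
  by (simp add: pcompose_pCons)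

lemma degree_pcompose_lin: "(c::'a::field) \<noteq> 0 \<Longrightarrow> degree (pcompose f [:0, c:]) = degree f"
  by (simp add: degree_pcompose)

lemma pcompose_lin_inv: "(c::'a::field) \<noteq> 0 \<Longrightarrow> pcompose (pcompose f [:0, c:]) [:0, inverse c:] = f"
  by (simp add: pcompose_assoc[symmetric] pcompose_lin_lin)

lemma sc_monic:
  fixes f :: "'a::field poly"
  assumes "l \<noteq> 0" "lead_coeff f = 1"
  shows "lead_coeff (sc l f) = 1" "degree (sc l f) = degree f"
proof -
  have il: "inverse l \<noteq> 0" using assms by simp
  show d: "degree (sc l f) = degree f" using assms il by (simp add: sc_def degree_pcompose_lin)
  have "lead_coeff (pcompose f [:0, inverse l:]) = lead_coeff f * lead_coeff [:0, inverse l:] ^ degree f"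
    by (rule lead_coeff_comp) (use il in simp)
  hence "lead_coeff (pcompose f [:0, inverse l:]) = inverse l ^ degree f" using assms il by simp
  moreover have "lead_coeff (sc l f) = l ^ degree f * lead_coeff (pcompose f [:0, inverse l:])"
    unfolding sc_def using il by (simp add: degree_pcompose_lin)
  ultimately show "lead_coeff (sc l f) = 1" using assms by (simp add: power_mult_distrib[symmetric])
qed

lemma sc_inv:
  fixes f :: "'a::field poly"
  assumes "l \<noteq> 0"
  shows "sc (inverse l) (sc l f) = f"
proof -
  have il: "inverse l \<noteq> 0" using assms by simp
  have d: "degree (sc l f) = degree f" using assms il by (simp add: sc_def degree_pcompose_lin)
  have "sc (inverse l) (sc l f) = smult (inverse l ^ degree (sc l f)) (pcompose (sc l f) [:0, inverse (inverse l):])"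
    by (rule sc_def)
  also have "\<dots> = smult (inverse l ^ degree f) (pcompose (smult (l ^ degree f) (pcompose f [:0, inverse l:])) [:0, inverse (inverse l):])"
    unfolding d by (simp only: sc_def)
  also have "\<dots> = smult (inverse l ^ degree f * l ^ degree f) (pcompose (pcompose f [:0, inverse l:]) [:0, inverse (inverse l):])"
    by (simp only: pcompose_smult smult_smult)
  also have "pcompose (pcompose f [:0, inverse l:]) [:0, inverse (inverse l):] = f"
    by (rule pcompose_lin_inv[OF il])
  also have "inverse l ^ degree f * l ^ degree f = 1" using assms by (simp add: power_mult_distrib[symmetric])
  finally show ?thesis by simp
qed

lemma unit_poly_iff:
  fixes p :: "'a::field poly"
  shows "p dvd 1 \<longleftrightarrow> p \<noteq> 0 \<and> degree p = 0"
  by (cases "p = 0") (simp_all add: is_unit_iff_degree)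

lemma irreducible_pcompose_lin:
  fixes f :: "'a::field poly"
  assumes c: "c \<noteq> 0" and irr: "irreducible f"
  shows "irreducible (pcompose f [:0, c:])"
proof -
  have ic: "inverse c \<noteq> 0" using c by simp
  let ?g = "pcompose f [:0, c:]"
  have bk: "pcompose ?g [:0, inverse c:] = f" by (rule pcompose_lin_inv[OF c])
  have f0: "f \<noteq> 0" using irr by auto
  have nu: "\<not> f dvd 1" using irr by (rule irreducible_not_unit)
  have g0: "?g \<noteq> 0" using bk f0 by auto
  show ?thesis
  proof (rule irreducibleI)
    show "?g \<noteq> 0" by (rule g0)
    show "\<not> ?g dvd 1"
    proof
      assume "?g dvd 1"
      hence "degree ?g = 0" by (simp add: unit_poly_iff)
      hence "degree f = 0" using c by (simp add: degree_pcompose_lin)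
      thus False using nu f0 by (simp add: unit_poly_iff)
    qed
    fix a b assume ab: "?g = a * b"
    have "f = pcompose a [:0, inverse c:] * pcompose b [:0, inverse c:]"
      using bk ab by (simp add: pcompose_mult)
    hence "pcompose a [:0, inverse c:] dvd 1 \<or> pcompose b [:0, inverse c:] dvd 1"
      by (rule irreducibleD[OF irr])
    moreover have "a \<noteq> 0" "b \<noteq> 0" using ab g0 by auto
    ultimately show "a dvd 1 \<or> b dvd 1"
      using ic by (auto simp: unit_poly_iff degree_pcompose_lin)
  qed
qed

lemma sc_irreducible:
  fixes f :: "'a::field poly"
  assumes "l \<noteq> 0" "irreducible f"
  shows "irreducible (sc l f)"
proof -
  have e: "sc l f = [:l ^ degree f:] * pcompose f [:0, inverse l:]" by (simp add: sc_def)
  have u: "is_unit [:l ^ degree f:]" using assms by (simp add: is_unit_const_poly_iff dvd_field_iff)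
  have i: "irreducible (pcompose f [:0, inverse l:])"
    using assms by (intro irreducible_pcompose_lin) simp_all
  show ?thesis unfolding e using irreducible_mult_unit_left[OF u] i by blast
qed

lemma smult_mult_split: "smult (a * b) (p * q) = smult a p * smult b (q::'b::field poly)"
  by (simp add: mult.commute)

lemma lin_prod_scale:
  fixes L :: "'b::field"
  assumes "L \<noteq> 0"
  shows "smult (L ^ length xs) (pcompose (\<Prod>x\<leftarrow>xs. [:-x, 1:]) [:0, inverse L:]) = (\<Prod>x\<leftarrow>xs. [:-(L * x), 1:])"
proof (induction xs)
  case Nil thus ?case by (simp add: pcompose_1)
next
  case (Cons x xs)
  have lin: "smult L (pcompose [:-x, 1:] [:0, inverse L:]) = [:-(L * x), 1:]"
    using assms by (simp add: pcompose_pCons)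
  have p: "(\<Prod>y\<leftarrow>x # xs. [:-y, 1:]) = [:-x, 1:] * (\<Prod>y\<leftarrow>xs. [:-y, 1:])"
    by (simp del: mult_pCons_left)
  have "smult (L ^ length (x # xs)) (pcompose (\<Prod>y\<leftarrow>x # xs. [:-y, 1:]) [:0, inverse L:])
      = smult (L * L ^ length xs) (pcompose [:-x, 1:] [:0, inverse L:] * pcompose (\<Prod>y\<leftarrow>xs. [:-y, 1:]) [:0, inverse L:])"
    unfolding p pcompose_mult by simp
  also have "\<dots> = smult L (pcompose [:-x, 1:] [:0, inverse L:]) * smult (L ^ length xs) (pcompose (\<Prod>y\<leftarrow>xs. [:-y, 1:]) [:0, inverse L:])"
    by (rule smult_mult_split)
  also note lin
  also note Cons.IH
  finally show ?case by simp
qed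

context
  fixes k :: nat
  assumes qk: "card (UNIV :: 'a::{finite,field} set) = 2 ^ k"
begin

lemma disc_sc:
  fixes f :: "'a poly"
  assumes l: "l \<noteq> 0" and f: "lead_coeff f = 1" "degree f \<ge> 2"
  shows "disc (sc l f) = l ^ (degree f * (degree f - 1)) * disc f"
proof -
  let ?m = "degree f"
  let ?L = "to_ac l"
  let ?xs = "disc_roots f"
  let ?ys = "disc_roots (sc l f)"
  have L0: "?L \<noteq> 0" using l by simp
  have g: "lead_coeff (sc l f) = 1" "degree (sc l f) = ?m" using sc_monic[OF l f(1)] by auto
  have g2: "degree (sc l f) \<ge> 2" using g f by simp
  have lx: "length ?xs = ?m" by (rule monic_roots(2)[OF f(1)])
  have "map_poly to_ac (sc l f) = smult (?L ^ ?m) (pcompose (map_poly to_ac f) (map_poly to_ac [:0, inverse l:]))"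
    unfolding sc_def
    by (simp add: map_poly_smult map_poly_hom_pcompose)
  also have "map_poly to_ac [:0, inverse l:] = [:0, inverse ?L:]" by (simp add: map_poly_pCons)
  also have "map_poly to_ac f = (\<Prod>x\<leftarrow>?xs. [:-x, 1:])" by (rule monic_roots(1)[OF f(1)])
  also have "smult (?L ^ ?m) (pcompose (\<Prod>x\<leftarrow>?xs. [:-x, 1:]) [:0, inverse ?L:]) = (\<Prod>x\<leftarrow>?xs. [:-(?L * x), 1:])"
    using lin_prod_scale[OF L0, of ?xs] lx by simp
  also have "\<dots> = (\<Prod>y\<leftarrow>map ((*) ?L) ?xs. [:-y, 1:])" by (simp add: o_def)
  finally have "(\<Prod>y\<leftarrow>?ys. [:-y, 1:]) = (\<Prod>y\<leftarrow>map ((*) ?L) ?xs. [:-y, 1:])"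
    using monic_roots(1)[OF g(1)] by simp
  hence "mset ?ys = mset (map ((*) ?L) ?xs)" by (rule lin_prod_unique)
  hence "Drec ?ys = Drec (map ((*) ?L) ?xs)" by (rule Drec_mset)
  also have "\<dots> = ?L ^ (?m * (?m - 1)) * Drec ?xs" using Drec_scale lx by metis
  finally have "to_ac (disc (sc l f)) = ?L ^ (?m * (?m - 1)) * to_ac (disc f)"
    using to_ac_disc[OF qk g(1) g2] to_ac_disc[OF qk f] by simp
  hence "to_ac (disc (sc l f)) = to_ac (l ^ (?m * (?m - 1)) * disc f)" by simp
  thus ?thesis by (simp only: to_ac_eq_iff)
qed

end

lemma pow_surj:
  fixes d :: "'a::{finite,field}"
  assumes cop: "gcd (card (UNIV :: 'a set) - 1) e = 1" and d: "d \<noteq> 0"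
  shows "\<exists>l. l \<noteq> 0 \<and> l ^ e = d"
proof -
  let ?q = "card (UNIV :: 'a set)"
  define N where "N = UNIV - {0::'a}"
  have q1: "?q - 1 \<noteq> 0"
  proof -
    have "{0::'a, 1} \<subseteq> UNIV" by simp
    hence "card {0::'a, 1} \<le> ?q" by (intro card_mono) simp_all
    thus ?thesis by simp
  qed
  obtain a b where ab: "(?q - 1) * a = e * b + gcd (?q - 1) e" using bezout_nat[OF q1] by blast
  have inj: "inj_on (\<lambda>x. x ^ e) N"
  proof (rule inj_onI)
    fix x y assume x: "x \<in> N" and y: "y \<in> N" and e: "x ^ e = y ^ e"
    define z where "z = x / y"
    have y0: "y \<noteq> 0" using y by (simp add: N_def)
    have z0: "z \<noteq> 0" using x y by (simp add: N_def z_def)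
    have ze: "z ^ e = 1" using e y0 by (simp add: z_def power_divide)
    have zq: "z ^ (?q - 1) = 1" by (rule fermat[OF z0])
    have "z ^ ((?q - 1) * a) = 1" by (simp only: power_mult zq power_one)
    also have "(?q - 1) * a = e * b + 1" using ab cop by simp
    finally have "z * z ^ (e * b) = 1" by (simp add: power_add)
    hence "z = 1" by (simp add: power_mult ze)
    thus "x = y" using y0 by (simp add: z_def)
  qed
  have "(\<lambda>x. x ^ e) ` N \<subseteq> N" by (auto simp: N_def)
  hence "(\<lambda>x. x ^ e) ` N = N" using inj by (intro endo_inj_surj) simp_all
  moreover have "d \<in> N" using d by (simp add: N_def)
  ultimately obtain l where "l \<in> N" "l ^ e = d" by (metis imageE)
  thus ?thesis by (auto simp: N_def)
qed

lemma fiber_eq: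
  fixes m :: nat and P :: "'a::{finite,field} poly \<Rightarrow> bool" and d :: 'a
  assumes qk: "card (UNIV :: 'a set) = 2 ^ k" and m: "m \<ge> 2"
    and cop: "gcd (card (UNIV :: 'a set) - 1) (m * (m - 1)) = 1"
    and Ppres: "\<And>l f. l \<noteq> 0 \<Longrightarrow> P f \<Longrightarrow> P (sc l f)"
    and d: "d \<noteq> 0"
  shows "card {f. lead_coeff f = 1 \<and> degree f = m \<and> P f \<and> disc f = d}
       = card {f. lead_coeff f = 1 \<and> degree f = m \<and> P f \<and> disc f = 1}"
proof -
  obtain l where l: "l \<noteq> 0" "l ^ (m * (m - 1)) = d" using pow_surj[OF cop d] by blast
  have il: "inverse l \<noteq> 0" using l by simp
  let ?A = "{f. lead_coeff f = 1 \<and> degree f = m \<and> P f \<and> disc f = (1::'a)}"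
  let ?B = "{f. lead_coeff f = 1 \<and> degree f = m \<and> P f \<and> disc f = d}"
  have "bij_betw (sc l) ?A ?B"
  proof (rule bij_betw_byWitness[where f' = "sc (inverse l)"])
    show "\<forall>a\<in>?A. sc (inverse l) (sc l a) = a" using sc_inv[OF l(1)] by blast
    show "\<forall>a\<in>?B. sc l (sc (inverse l) a) = a" using sc_inv[OF il] by simp
    show "sc l ` ?A \<subseteq> ?B"
    proof
      fix g assume "g \<in> sc l ` ?A"
      then obtain f where f: "f \<in> ?A" "g = sc l f" by blast
      have f1: "lead_coeff f = 1" "degree f = m" "P f" "disc f = 1" using f by auto
      have "lead_coeff g = 1" "degree g = m" using sc_monic[OF l(1) f1(1)] f1 f by auto
      moreover have "P g" using Ppres[OF l(1) f1(3)] f by simp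
      moreover have "disc g = d" using disc_sc[OF qk l(1) f1(1)] f1 m l f by simp
      ultimately show "g \<in> ?B" by blast
    qed
    show "sc (inverse l) ` ?B \<subseteq> ?A"
    proof
      fix g assume "g \<in> sc (inverse l) ` ?B"
      then obtain f where f: "f \<in> ?B" "g = sc (inverse l) f" by blast
      have f1: "lead_coeff f = 1" "degree f = m" "P f" "disc f = d" using f by auto
      have "lead_coeff g = 1" "degree g = m" using sc_monic[OF il f1(1)] f1 f by auto
      moreover have "P g" using Ppres[OF il f1(3)] f by simp
      moreover have "disc g = inverse l ^ (m * (m - 1)) * d"
        using disc_sc[OF qk il f1(1)] f1 m f by simp
      hence "disc g = 1" using l d by (simp add: power_inverse)
      ultimately show "g \<in> ?A" by blast
    qed
  qed
  thus ?thesis by (simp add: bij_betw_same_card)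
qed

theorem theorem1p2:
  fixes m :: nat
  assumes q2: "\<exists>k. card (UNIV :: 'a set) = 2 ^ k"
    and m: "m \<ge> 2"
    and cop: "gcd (card (UNIV :: 'a set) - 1) (m * (m - 1)) = 1"
  shows "(\<forall>d::'a::{finite,field}. card {f :: 'a poly. lead_coeff f = 1 \<and> degree f = m \<and> disc f = d}
                 = card (UNIV :: 'a set) ^ (m - 1))
       \<and> (\<exists>N. \<forall>d::'a::{finite,field}. d \<noteq> 0 \<longrightarrow>
             card {f :: 'a poly. lead_coeff f = 1 \<and> degree f = m \<and> irreducible f \<and> disc f = d} = N)"
proof -
  obtain k where qk: "card (UNIV :: 'a set) = 2 ^ k" using q2 by blast
  let ?q = "card (UNIV :: 'a set)"
  define S where "S d = {f :: 'a poly. lead_coeff f = 1 \<and> degree f = m \<and> disc f = d}" for d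
  define N where "N = card (S 1)"
  have S0: "card (S 0) = ?q ^ (m - 1)"
  proof -
    have "S 0 = {f :: 'a poly. lead_coeff f = 1 \<and> degree f = m \<and> \<not> copr f (pderiv f)}"
      unfolding S_def using disc_zero_iff_copr[OF qk] m by auto
    thus ?thesis using count_nonsq[OF qk m] by simp
  qed
  have SN: "card (S d) = N" if "d \<noteq> 0" for d
  proof -
    have "card {f :: 'a poly. lead_coeff f = 1 \<and> degree f = m \<and> True \<and> disc f = d}
        = card {f :: 'a poly. lead_coeff f = 1 \<and> degree f = m \<and> True \<and> disc f = 1}"
      by (rule fiber_eq[OF qk m cop _ that]) simp
    thus ?thesis by (simp add: S_def N_def)
  qed
  have finM: "finite (Mon m :: 'a poly set)" using card_Mon by blast
  have finS: "finite (S d)" for d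
    by (rule finite_subset[OF _ finM]) (auto simp: S_def Mon_def)
  have U: "(\<Union>d\<in>UNIV. S d) = Mon m" unfolding S_def Mon_def by blast
  have "card (Mon m :: 'a poly set) = (\<Sum>d\<in>UNIV. card (S d))"
    unfolding U[symmetric]
  proof (rule card_UN_disjoint)
    show "finite (UNIV :: 'a set)" by simp
    show "\<forall>i\<in>UNIV. finite (S i)" using finS by blast
    show "\<forall>i\<in>UNIV. \<forall>j\<in>UNIV. i \<noteq> j \<longrightarrow> S i \<inter> S j = {}" by (auto simp: S_def)
  qed
  also have "\<dots> = card (S 0) + (\<Sum>d\<in>UNIV - {0}. card (S d))"
    by (rule sum.remove) simp_all
  also have "(\<Sum>d\<in>UNIV - {0}. card (S d)) = (\<Sum>d\<in>UNIV - {0::'a}. N)"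
    by (rule sum.cong) (simp_all add: SN)
  also have "\<dots> = (?q - 1) * N" by (simp add: card_Diff_singleton)
  finally have e: "?q ^ m = ?q ^ (m - 1) + (?q - 1) * N" using card_Mon[of m, where 'a='a] S0 by simp
  have q0: "?q - 1 \<noteq> 0"
  proof -
    have "{0::'a, 1} \<subseteq> UNIV" by simp
    hence "card {0::'a, 1} \<le> ?q" by (intro card_mono) simp_all
    thus ?thesis by simp
  qed
  have "?q ^ m = ?q * ?q ^ (m - 1)" using m by (cases m) simp_all
  also have "\<dots> = ?q ^ (m - 1) + (?q - 1) * ?q ^ (m - 1)" using q0 by (cases ?q) simp_all
  finally have "(?q - 1) * N = (?q - 1) * ?q ^ (m - 1)" using e by simp
  hence NN: "N = ?q ^ (m - 1)" using q0 by simp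
  have part1: "\<forall>d::'a. card {f :: 'a poly. lead_coeff f = 1 \<and> degree f = m \<and> disc f = d} = ?q ^ (m - 1)"
  proof
    fix d :: 'a
    show "card {f :: 'a poly. lead_coeff f = 1 \<and> degree f = m \<and> disc f = d} = ?q ^ (m - 1)"
      using S0 SN[of d] NN by (cases "d = 0") (simp_all add: S_def)
  qed
  have part2: "\<exists>N. \<forall>d::'a. d \<noteq> 0 \<longrightarrow>
      card {f :: 'a poly. lead_coeff f = 1 \<and> degree f = m \<and> irreducible f \<and> disc f = d} = N"
  proof (intro exI allI impI)
    fix d :: 'a assume d: "d \<noteq> 0"
    show "card {f :: 'a poly. lead_coeff f = 1 \<and> degree f = m \<and> irreducible f \<and> disc f = d}
        = card {f :: 'a poly. lead_coeff f = 1 \<and> degree f = m \<and> irreducible f \<and> disc f = 1}"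
      by (rule fiber_eq[where P = irreducible, OF qk m cop _ d]) (rule sc_irreducible)
  qed
  show ?thesis using part1 part2 by blast
qed

end
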